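(* Let $\{\varphi_n\},\{\psi_n\}$ be biorthogonal sequences in a Hilbert space $\mathcal H$ such that $D(\varphi)$ and $D(\psi)$ are dense in $\mathcal H$. Then: (1) $(\{\varphi_n\},\{\psi_n\})$ is a $(D(\varphi),\mathcal E)$-quasi basis for some dense subspace $\mathcal E$ with $D_\varphi\subseteq\mathcal E\subseteq D(\psi)$ if and only if $D_\varphi$ is dense in $\mathcal H$. In that case $(\{\varphi_n\},\{\psi_n\})$ is a $(D(\varphi),D_\varphi)$-quasi basis. (2) $(\{\varphi_n\},\{\psi_n\})$ is a $(\mathcal D,D(\psi))$-quasi basis for some dense subspace $\mathcal D$ with $D_\psi\subseteq\mathcal D\subseteq D(\varphi)$ if and only if $D_\psi$ is dense in $\mathcal H$. In that case $(\{\varphi_n\},\{\psi_n\})$ is a $(D_\psi,D(\psi))$-quasi basis.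
   Context: Inner product linear in the first argument. Biorthogonal: $\langle\varphi_n,\psi_m\rangle=\delta_{nm}$. $D_\varphi,D_\psi$ are the linear spans; $D(\varphi)=\{x:\sum_n|\langle x,\varphi_n\rangle|^2<\infty\}$, similarly $D(\psi)$. For dense subspaces $\mathcal D,\mathcal E$ with $D_\psi\subseteq\mathcal D\subseteq D(\varphi)$, $D_\varphi\subseteq\mathcal E\subseteq D(\psi)$, the pair is a $(\mathcal D,\mathcal E)$-quasi basis if $\sum_k\langle x,\varphi_k\rangle\langle\psi_k,y\rangle=\langle x,y\rangle$ for all $x\in\mathcal D$, $y\in\mathcal E$. *)

theory Defs
  imports "HOL-Analysis.Analysis"
begin

text \<open>Complex Hilbert spaces (not available in the distribution): a complete normed
space with a complex scalar multiplication and a complex inner product, linear in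
the first argument, inducing the norm.\<close>

class chilbert = real_normed_vector + complete_space +
  fixes scaleC :: "complex \<Rightarrow> 'a \<Rightarrow> 'a" (infixr "*\<^sub>C" 75)
    and cinner :: "'a \<Rightarrow> 'a \<Rightarrow> complex"
  assumes scaleC_add_right: "a *\<^sub>C (x + y) = a *\<^sub>C x + a *\<^sub>C y"
    and scaleC_add_left: "(a + b) *\<^sub>C x = a *\<^sub>C x + b *\<^sub>C x"
    and scaleC_scaleC: "a *\<^sub>C (b *\<^sub>C x) = (a * b) *\<^sub>C x"
    and scaleC_one: "1 *\<^sub>C x = x"
    and scaleR_scaleC: "scaleR r x = complex_of_real r *\<^sub>C x"
    and cinner_add_left: "cinner (x + y) z = cinner x z + cinner y z"
    and cinner_scaleC_left: "cinner (a *\<^sub>C x) y = a * cinner x y"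
    and cinner_commute: "cinner x y = cnj (cinner y x)"
    and cinner_self_nonneg: "0 \<le> Re (cinner x x)"
    and cinner_self_eq_zero: "cinner x x = 0 \<longleftrightarrow> x = 0"
    and norm_eq_sqrt_cinner: "norm x = sqrt (Re (cinner x x))"

instantiation complex :: chilbert
begin
definition scaleC_complex :: "complex \<Rightarrow> complex \<Rightarrow> complex" where "scaleC_complex a x = a * x"
definition cinner_complex :: "complex \<Rightarrow> complex \<Rightarrow> complex" where "cinner_complex x y = x * cnj y"
instance
  apply standard
  apply (auto simp: scaleC_complex_def cinner_complex_def algebra_simps scaleR_conv_of_real)
  apply (simp_all add: complex_mult_cnj cmod_def power2_eq_square)
  done
end

definition csubspace :: "'a::chilbert set \<Rightarrow> bool" where
  "csubspace S \<longleftrightarrow> 0 \<in> S \<and> (\<forall>x\<in>S. \<forall>y\<in>S. x + y \<in> S) \<and> (\<forall>c. \<forall>x\<in>S. c *\<^sub>C x \<in> S)"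

definition dense_in_H :: "'a::chilbert set \<Rightarrow> bool" where
  "dense_in_H S \<longleftrightarrow> closure S = UNIV"

definition biorthogonal :: "(nat \<Rightarrow> 'a::chilbert) \<Rightarrow> (nat \<Rightarrow> 'a) \<Rightarrow> bool" where
  "biorthogonal \<phi> \<psi> \<longleftrightarrow> (\<forall>n m. cinner (\<phi> n) (\<psi> m) = (if n = m then 1 else 0))"

definition lspan :: "(nat \<Rightarrow> 'a::chilbert) \<Rightarrow> 'a set" where
  "lspan \<phi> = {\<Sum>i\<in>F. c i *\<^sub>C \<phi> i | F c. finite F}"

definition Dom :: "(nat \<Rightarrow> 'a::chilbert) \<Rightarrow> 'a set" where
  "Dom \<phi> = {x. summable (\<lambda>n. (cmod (cinner x (\<phi> n)))\<^sup>2)}"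

definition quasi_basis :: "(nat \<Rightarrow> 'a::chilbert) \<Rightarrow> (nat \<Rightarrow> 'a) \<Rightarrow> 'a set \<Rightarrow> 'a set \<Rightarrow> bool" where
  "quasi_basis \<phi> \<psi> D E \<longleftrightarrow>
     csubspace D \<and> csubspace E \<and> dense_in_H D \<and> dense_in_H E \<and>
     lspan \<psi> \<subseteq> D \<and> D \<subseteq> Dom \<phi> \<and> lspan \<phi> \<subseteq> E \<and> E \<subseteq> Dom \<psi> \<and>
     (\<forall>x\<in>D. \<forall>y\<in>E. (\<lambda>k. cinner x (\<phi> k) * cinner (\<psi> k) y) sums cinner x y)"

end

theory Submission imports Defs begin
lemma scaleC_zero_left [simp]: "(0::complex) *\<^sub>C (x::'a::chilbert) = 0"
proof -
  have "(0::complex) *\<^sub>C x = 0 *\<^sub>C x + 0 *\<^sub>C x" using scaleC_add_left[of 0 0 x] by simp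
  then show ?thesis by simp
qed

lemma scaleC_zero_right [simp]: "a *\<^sub>C (0::'a::chilbert) = 0"
proof -
  have "a *\<^sub>C (0::'a) = a *\<^sub>C 0 + a *\<^sub>C 0" using scaleC_add_right[of a 0 0] by simp
  then show ?thesis by simp
qed

lemma scaleC_minus_one: "(-1::complex) *\<^sub>C (x::'a::chilbert) = - x"
proof -
  have "x + (-1::complex) *\<^sub>C x = 0"
    using scaleC_add_left[of 1 "-1" x] by (simp add: scaleC_one)
  then show ?thesis by (simp add: add_eq_0_iff)
qed

lemma cinner_zero_left [simp]: "cinner (0::'a::chilbert) y = 0"
proof -
  have "cinner (0::'a) y = cinner 0 y + cinner 0 y" using cinner_add_left[of 0 0 y] by simp
  then show ?thesis by simp
qed

lemma cinner_zero_right [simp]: "cinner (x::'a::chilbert) 0 = 0"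
  by (subst cinner_commute) simp

lemma cinner_add_right: "cinner (x::'a::chilbert) (y + z) = cinner x y + cinner x z"
  by (subst (1 2 3) cinner_commute) (simp add: cinner_add_left)

lemma cinner_scaleC_right: "cinner (x::'a::chilbert) (a *\<^sub>C y) = cnj a * cinner x y"
  by (subst (1 2) cinner_commute) (simp add: cinner_scaleC_left)

lemma cinner_minus_left: "cinner (- x::'a::chilbert) y = - cinner x y"
  using cinner_scaleC_left[of "-1" x y] by (simp add: scaleC_minus_one)

lemma cinner_minus_right: "cinner (x::'a::chilbert) (- y) = - cinner x y"
  using cinner_scaleC_right[of x "-1" y] by (simp add: scaleC_minus_one)

lemma cinner_diff_left: "cinner (x - y::'a::chilbert) z = cinner x z - cinner y z"
  using cinner_add_left[of x "-y" z] by (simp add: cinner_minus_left)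

lemma cinner_diff_right: "cinner (x::'a::chilbert) (y - z) = cinner x y - cinner x z"
  using cinner_add_right[of x y "-z"] by (simp add: cinner_minus_right)

lemma cinner_sum_right: "cinner (x::'a::chilbert) (\<Sum>i\<in>F. f i) = (\<Sum>i\<in>F. cinner x (f i))"
  by (induction F rule: infinite_finite_induct) (auto simp: cinner_add_right)

lemma cinner_sum_left: "cinner (\<Sum>i\<in>F. f i) (y::'a::chilbert) = (\<Sum>i\<in>F. cinner (f i) y)"
  by (induction F rule: infinite_finite_induct) (auto simp: cinner_add_left)

lemma scaleC_sum_right: "a *\<^sub>C (\<Sum>i\<in>F. f i) = (\<Sum>i\<in>F. a *\<^sub>C (f i::'a::chilbert))"
  by (induction F rule: infinite_finite_induct) (auto simp: scaleC_add_right)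

lemma cinner_self_real: "cinner (x::'a::chilbert) x = complex_of_real ((norm x)\<^sup>2)"
proof -
  have "Im (cinner x x) = 0" using cinner_commute[of x x]
    by (metis cnj.simps(2) complex.expand eq_iff_diff_eq_0 minus_diff_eq neg_equal_zero)
  moreover have "(norm x)\<^sup>2 = Re (cinner x x)"
    using norm_eq_sqrt_cinner[of x] cinner_self_nonneg[of x] by simp
  ultimately show ?thesis by (simp add: complex_eq_iff)
qed

lemma norm_sq_Re: "(norm (x::'a::chilbert))\<^sup>2 = Re (cinner x x)"
  by (simp add: cinner_self_real)

lemma Re_cinner_swap: "Re (cinner (y::'a::chilbert) x) = Re (cinner x y)"
  by (subst cinner_commute) simp

lemma norm_diff_sq: "(norm (x - y::'a::chilbert))\<^sup>2 = (norm x)\<^sup>2 + (norm y)\<^sup>2 - 2 * Re (cinner x y)"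
  by (simp add: norm_sq_Re cinner_diff_left cinner_diff_right Re_cinner_swap[of y x])

lemma norm_add_sq: "(norm (x + y::'a::chilbert))\<^sup>2 = (norm x)\<^sup>2 + (norm y)\<^sup>2 + 2 * Re (cinner x y)"
  by (simp add: norm_sq_Re cinner_add_left cinner_add_right Re_cinner_swap[of y x])

lemma parallelogram: "(norm (a + b::'a::chilbert))\<^sup>2 + (norm (a - b))\<^sup>2 = 2 * (norm a)\<^sup>2 + 2 * (norm b)\<^sup>2"
  by (simp add: norm_add_sq norm_diff_sq)

lemma norm_scaleC_sq: "(norm (c *\<^sub>C (x::'a::chilbert)))\<^sup>2 = (cmod c)\<^sup>2 * (norm x)\<^sup>2"
proof -
  have "cinner (c *\<^sub>C x) (c *\<^sub>C x) = (c * cnj c) * cinner x x"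
    by (simp add: cinner_scaleC_left cinner_scaleC_right)
  then show ?thesis
  proof -
    have "complex_of_real ((norm (c *\<^sub>C x))\<^sup>2) = complex_of_real ((cmod c)\<^sup>2 * (norm x)\<^sup>2)"
      using \<open>cinner (c *\<^sub>C x) (c *\<^sub>C x) = (c * cnj c) * cinner x x\<close>
      by (simp only: cinner_self_real complex_norm_square[symmetric] of_real_mult)
    then show ?thesis using of_real_eq_iff by blast
  qed
qed

lemma orth_variational:
  fixes x s :: "'a::chilbert"
  assumes "\<And>c. norm x \<le> norm (x - c *\<^sub>C s)"
  shows "cinner x s = 0"
proof -
  define a where "a = cinner x s"
  define r where "r = 1 / ((norm s)\<^sup>2 + 1)"
  have r: "r > 0" "r * (norm s)\<^sup>2 < 1" proof -
    have p: "0 < (norm s)\<^sup>2 + 1" by (simp add: add_nonneg_pos)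
    then show "r > 0" unfolding r_def by simp
    show "r * (norm s)\<^sup>2 < 1" unfolding r_def using p by (simp add: divide_less_eq)
  qed
  define c where "c = complex_of_real r * a"
  have "(norm x)\<^sup>2 \<le> (norm (x - c *\<^sub>C s))\<^sup>2"
    using assms[of c] by (simp add: power_mono)
  also have "\<dots> = (norm x)\<^sup>2 + (cmod c)\<^sup>2 * (norm s)\<^sup>2 - 2 * Re (cnj c * a)"
    by (simp add: norm_diff_sq norm_scaleC_sq cinner_scaleC_right a_def)
  also have "Re (cnj c * a) = r * (cmod a)\<^sup>2"
    unfolding c_def by (simp add: mult.assoc complex_norm_square[symmetric] mult.commute[of "cnj a"])
  also have "(cmod c)\<^sup>2 = r\<^sup>2 * (cmod a)\<^sup>2" unfolding c_def using r by (simp add: norm_mult power_mult_distrib)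
  finally have "0 \<le> r * (cmod a)\<^sup>2 * (r * (norm s)\<^sup>2 - 2)" by (simp add: algebra_simps power2_eq_square)
  moreover have "r * (norm s)\<^sup>2 - 2 < 0" using r by simp
  ultimately have "r * (cmod a)\<^sup>2 \<le> 0"
    using zero_le_mult_iff[of "r * (cmod a)\<^sup>2" "r * (norm s)\<^sup>2 - 2"] by linarith
  then have "(cmod a)\<^sup>2 \<le> 0" using r(1) by (simp add: mult_le_0_iff)
  then show ?thesis unfolding a_def by simp
qed
lemma orth_dense_zero:
  fixes x :: "'a::chilbert"
  assumes "dense_in_H E" "\<forall>y\<in>E. cinner x y = 0"
  shows "x = 0"
proof (rule ccontr)
  assume nz: "x \<noteq> 0"
  have "x \<in> closure E" using assms(1) unfolding dense_in_H_def by simp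
  then obtain y where y: "y \<in> E" "dist y x < norm x"
    using nz closure_approachable[of x E] zero_less_norm_iff[of x] by blast
  have "(norm (x - y))\<^sup>2 = (norm x)\<^sup>2 + (norm y)\<^sup>2"
    using norm_diff_sq[of x y] assms(2) y(1) by simp
  then have "(norm x)\<^sup>2 \<le> (norm (x - y))\<^sup>2" by simp
  then have "norm x \<le> norm (x - y)"
    using power2_le_imp_le norm_ge_zero by blast
  then show False using y(2) by (simp add: dist_norm norm_minus_commute)
qed

lemma csub_add: "csubspace S \<Longrightarrow> x \<in> S \<Longrightarrow> y \<in> S \<Longrightarrow> x + y \<in> S"
  unfolding csubspace_def by blast

lemma csub_scale: "csubspace S \<Longrightarrow> x \<in> S \<Longrightarrow> c *\<^sub>C x \<in> S"
  unfolding csubspace_def by blast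

lemma csub_zero: "csubspace S \<Longrightarrow> 0 \<in> S"
  unfolding csubspace_def by blast

lemma dense_of_orth:
  fixes S :: "'a::chilbert set"
  assumes S: "csubspace S" and orth: "\<And>x. (\<forall>s\<in>S. cinner x s = 0) \<Longrightarrow> x = 0"
  shows "dense_in_H S"
  unfolding dense_in_H_def
proof (rule ccontr)
  assume "closure S \<noteq> UNIV"
  then obtain z where z: "z \<notin> closure S" by blast
  define d where "d = Inf ((\<lambda>s. norm (z - s)) ` S)"
  have ne: "(\<lambda>s. norm (z - s)) ` S \<noteq> {}" using csub_zero[OF S] by blast
  have bdd: "bdd_below ((\<lambda>s. norm (z - s)) ` S)" by (rule bdd_belowI[of _ 0]) auto
  have dle: "\<And>s. s \<in> S \<Longrightarrow> d \<le> norm (z - s)"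
    unfolding d_def using bdd by (auto intro: cInf_lower)
  have d0: "0 \<le> d" unfolding d_def by (rule cInf_greatest[OF ne]) auto
  define e :: "nat \<Rightarrow> real" where "e n = 1 / real (Suc n)" for n
  have e_pos: "\<And>n. e n > 0" and e_le1: "\<And>n. e n \<le> 1" unfolding e_def by auto
  have e_mono: "\<And>m n. n \<le> m \<Longrightarrow> e m \<le> e n" unfolding e_def
    by (simp add: frac_le)
  have "\<forall>n. \<exists>s. s \<in> S \<and> norm (z - s) < d + e n"
  proof
    fix n
    have "d < d + e n" using e_pos by simp
    then obtain t where "t \<in> (\<lambda>s. norm (z - s)) ` S" "t < d + e n"
      using cInf_lessD[OF ne] unfolding d_def by blast
    then show "\<exists>s. s \<in> S \<and> norm (z - s) < d + e n" by blast
  qed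
  then obtain sq where sqS: "\<And>n. sq n \<in> S" and sqd: "\<And>n. norm (z - sq n) < d + e n"
    by metis
  have bound: "(norm (sq m - sq n))\<^sup>2 \<le> 4 * d * e m + 2 * (e m)\<^sup>2 + 4 * d * e n + 2 * (e n)\<^sup>2"
    for m n
  proof -
    define mid where "mid = complex_of_real (1/2) *\<^sub>C (sq m + sq n)"
    have midS: "mid \<in> S" unfolding mid_def using S sqS by (intro csub_scale csub_add)
    have "(z - sq m) + (z - sq n) = 2 *\<^sub>R (z - (1/2::real) *\<^sub>R (sq m + sq n))"
      by (simp add: algebra_simps scaleR_2)
    also have "(1/2::real) *\<^sub>R (sq m + sq n) = mid" unfolding mid_def by (rule scaleR_scaleC)
    finally have "norm ((z - sq m) + (z - sq n)) = 2 * norm (z - mid)" by simp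
    then have A: "norm ((z - sq m) + (z - sq n)) \<ge> 2 * d" using dle[OF midS] by simp
    have A2: "(norm ((z - sq m) + (z - sq n)))\<^sup>2 \<ge> 4 * d\<^sup>2"
      using power_mono[OF A, of 2] d0 by (simp add: power_mult_distrib)
    have B: "(z - sq m) - (z - sq n) = sq n - sq m" by simp
    have Cm: "(norm (z - sq m))\<^sup>2 \<le> (d + e m)\<^sup>2"
      using sqd[of m] by (simp add: power_mono)
    have Cn: "(norm (z - sq n))\<^sup>2 \<le> (d + e n)\<^sup>2"
      using sqd[of n] by (simp add: power_mono)
    have "(norm (sq m - sq n))\<^sup>2 = 2 * (norm (z - sq m))\<^sup>2 + 2 * (norm (z - sq n))\<^sup>2
         - (norm ((z - sq m) + (z - sq n)))\<^sup>2"
      using parallelogram[of "z - sq m" "z - sq n"] B by (simp add: norm_minus_commute)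
    also have "\<dots> \<le> 2 * (d + e m)\<^sup>2 + 2 * (d + e n)\<^sup>2 - 4 * d\<^sup>2" using A2 Cm Cn by linarith
    also have "\<dots> = 4 * d * e m + 2 * (e m)\<^sup>2 + 4 * d * e n + 2 * (e n)\<^sup>2"
      by (simp add: power2_eq_square algebra_simps)
    finally show ?thesis .
  qed
  have "Cauchy sq"
  proof (rule CauchyI)
    fix \<epsilon> :: real assume \<epsilon>: "0 < \<epsilon>"
    define K where "K = 4 * d + 2"
    have K: "K > 0" unfolding K_def using d0 by simp
    define \<delta> where "\<delta> = (\<epsilon>\<^sup>2 / 2) / K"
    have \<delta>: "0 < \<delta>" unfolding \<delta>_def using \<epsilon> K by simp
    have Kd: "K * \<delta> = \<epsilon>\<^sup>2 / 2" unfolding \<delta>_def using K by simp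
    obtain N where N: "inverse (real (Suc N)) < \<delta>" using reals_Archimedean[OF \<delta>] by blast
    have eN: "\<And>m. m \<ge> N \<Longrightarrow> e m < \<delta>"
      using e_mono N unfolding e_def by (metis inverse_eq_divide order_le_less_trans)
    have "\<forall>m\<ge>N. \<forall>n\<ge>N. norm (sq m - sq n) < \<epsilon>"
    proof (intro allI impI)
      fix m n assume mn: "m \<ge> N" "n \<ge> N"
      have t: "4 * d * e k + 2 * (e k)\<^sup>2 \<le> (4 * d + 2) * e k" for k
        using e_le1[of k] e_pos[of k] by (simp add: power2_eq_square algebra_simps mult_left_le)
      have "(4 * d + 2) * e m < (4 * d + 2) * \<delta>" using eN[OF mn(1)] d0 by simp
      moreover have "(4 * d + 2) * e n < (4 * d + 2) * \<delta>" using eN[OF mn(2)] d0 by simp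
      moreover have "(4 * d + 2) * \<delta> + (4 * d + 2) * \<delta> = \<epsilon>\<^sup>2"
        using Kd unfolding K_def by (simp add: mult.commute)
      ultimately have "(norm (sq m - sq n))\<^sup>2 < \<epsilon>\<^sup>2"
        using bound[of m n] t[of m] t[of n] by linarith
      then show "norm (sq m - sq n) < \<epsilon>" using \<epsilon> by (simp add: power_less_imp_less_base)
    qed
    then show "\<exists>M. \<forall>m\<ge>M. \<forall>n\<ge>M. norm (sq m - sq n) < \<epsilon>" by blast
  qed
  then obtain p where p: "sq \<longlonglongrightarrow> p" using Cauchy_convergent_iff convergent_def by blast
  have "p \<in> closure S" using sqS p by (meson closure_sequential)
  then have zp: "z \<noteq> p" using z by blast
  define x where "x = z - p"
  have e_lim: "e \<longlonglongrightarrow> 0" unfolding e_def using LIMSEQ_Suc[OF lim_const_over_n[of 1]]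
    by simp
  have "norm x \<le> d"
  proof (rule LIMSEQ_le[of "\<lambda>n. norm (z - sq n)" _ "\<lambda>n. d + e n"])
    show "(\<lambda>n. norm (z - sq n)) \<longlonglongrightarrow> norm x" unfolding x_def
      by (intro tendsto_intros p)
    show "(\<lambda>n. d + e n) \<longlonglongrightarrow> d" using tendsto_add[OF tendsto_const e_lim] by simp
    show "\<exists>N. \<forall>n\<ge>N. norm (z - sq n) \<le> d + e n" using sqd less_imp_le by blast
  qed
  have var: "norm x \<le> norm (x - c *\<^sub>C s)" if sS: "s \<in> S" for s c
  proof -
    have "d \<le> norm (z - (p + c *\<^sub>C s))"
    proof (rule LIMSEQ_le_const[of "\<lambda>n. norm (z - (sq n + c *\<^sub>C s))"])
      show "(\<lambda>n. norm (z - (sq n + c *\<^sub>C s))) \<longlonglongrightarrow> norm (z - (p + c *\<^sub>C s))"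
        by (intro tendsto_intros p)
      show "\<exists>N. \<forall>n\<ge>N. d \<le> norm (z - (sq n + c *\<^sub>C s))"
        using dle csub_add[OF S sqS csub_scale[OF S sS]] by blast
    qed
    then show ?thesis using \<open>norm x \<le> d\<close> unfolding x_def by (simp add: algebra_simps)
  qed
  have "\<forall>s\<in>S. cinner x s = 0" using var orth_variational by blast
  then have "x = 0" by (rule orth)
  then show False using zp unfolding x_def by simp
qed
lemma cinner_lincomb_left:
  "cinner (\<Sum>i\<in>F. c i *\<^sub>C u i) (y::'a::chilbert) = (\<Sum>i\<in>F. c i * cinner (u i) y)"
  by (simp add: cinner_sum_left cinner_scaleC_left)

lemma cinner_lincomb_right:
  "cinner (x::'a::chilbert) (\<Sum>i\<in>F. c i *\<^sub>C u i) = (\<Sum>i\<in>F. cnj (c i) * cinner x (u i))"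
  by (simp add: cinner_sum_right cinner_scaleC_right)

lemma biorth1: "biorthogonal \<phi> \<psi> \<Longrightarrow> cinner (\<phi> n) (\<psi> m) = (if n = m then 1 else 0)"
  unfolding biorthogonal_def by blast

lemma biorth2: "biorthogonal \<phi> \<psi> \<Longrightarrow> cinner (\<psi> m) (\<phi> n) = (if n = m then 1 else 0)"
  using biorth1[of \<phi> \<psi> n m] cinner_commute[of "\<psi> m" "\<phi> n"] by simp

lemma lspan_extend:
  assumes "finite G" "F \<subseteq> G"
  shows "(\<Sum>i\<in>F. c i *\<^sub>C \<phi> i) = (\<Sum>i\<in>G. (if i \<in> F then c i else 0) *\<^sub>C (\<phi> i::'a::chilbert))"
proof -
  have "(\<Sum>i\<in>G. (if i \<in> F then c i else 0) *\<^sub>C \<phi> i) = (\<Sum>i\<in>G. if i \<in> F then c i *\<^sub>C \<phi> i else 0)"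
    by (rule sum.cong) auto
  also have "\<dots> = (\<Sum>i\<in>G \<inter> F. c i *\<^sub>C \<phi> i)" using sum.inter_restrict[OF assms(1)] by metis
  also have "G \<inter> F = F" using assms(2) by blast
  finally show ?thesis by simp
qed

lemma lspan_memI: "finite F \<Longrightarrow> (\<Sum>i\<in>F. c i *\<^sub>C \<phi> i) \<in> lspan \<phi>"
  unfolding lspan_def by blast

lemma csubspace_lspan: "csubspace (lspan (\<phi>::nat \<Rightarrow> 'a::chilbert))"
  unfolding csubspace_def
proof (intro conjI ballI allI)
  show "0 \<in> lspan \<phi>" unfolding lspan_def
    by (rule CollectI, rule exI[of _ "{}"], auto)
next
  fix x y assume "x \<in> lspan \<phi>" "y \<in> lspan \<phi>"
  then obtain F c G d where F: "finite F" "x = (\<Sum>i\<in>F. c i *\<^sub>C \<phi> i)"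
    and G: "finite G" "y = (\<Sum>i\<in>G. d i *\<^sub>C \<phi> i)" unfolding lspan_def by blast
  have fu: "finite (F \<union> G)" using F(1) G(1) by simp
  have "x + y = (\<Sum>i\<in>F \<union> G. ((if i \<in> F then c i else 0) + (if i \<in> G then d i else 0)) *\<^sub>C \<phi> i)"
    unfolding F(2) G(2) lspan_extend[OF fu Un_upper1[of F G], of c] lspan_extend[OF fu Un_upper2[of G F], of d]
    by (simp add: scaleC_add_left sum.distrib)
  then show "x + y \<in> lspan \<phi>" using lspan_memI[OF fu] by metis
next
  fix a x assume "x \<in> lspan \<phi>"
  then obtain F c where F: "finite F" "x = (\<Sum>i\<in>F. c i *\<^sub>C \<phi> i)" unfolding lspan_def by blast
  have "a *\<^sub>C x = (\<Sum>i\<in>F. (a * c i) *\<^sub>C \<phi> i)"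
    unfolding F(2) by (simp add: scaleC_sum_right scaleC_scaleC)
  then show "a *\<^sub>C x \<in> lspan \<phi>" using lspan_memI[OF F(1)] by metis
qed

lemma gen_in_lspan: "\<phi> k \<in> lspan (\<phi>::nat \<Rightarrow> 'a::chilbert)"
proof -
  have "(\<Sum>i\<in>{k}. (\<lambda>_. 1::complex) i *\<^sub>C \<phi> i) \<in> lspan \<phi>" by (rule lspan_memI) simp
  then show ?thesis by (simp add: scaleC_one)
qed

lemma csubspace_Dom: "csubspace (Dom (\<phi>::nat \<Rightarrow> 'a::chilbert))"
  unfolding csubspace_def Dom_def
proof (intro conjI ballI allI; clarify?)
  show "summable (\<lambda>n. (cmod (cinner (0::'a) (\<phi> n)))\<^sup>2)" by simp
next
  fix x y :: 'a
  assume x: "summable (\<lambda>n. (cmod (cinner x (\<phi> n)))\<^sup>2)"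
    and y: "summable (\<lambda>n. (cmod (cinner y (\<phi> n)))\<^sup>2)"
  have b: "(cmod (cinner (x + y) (\<phi> n)))\<^sup>2 \<le> 2 * (cmod (cinner x (\<phi> n)))\<^sup>2 + 2 * (cmod (cinner y (\<phi> n)))\<^sup>2" for n
  proof -
    have "cmod (cinner (x + y) (\<phi> n)) \<le> cmod (cinner x (\<phi> n)) + cmod (cinner y (\<phi> n))"
      by (simp add: cinner_add_left norm_triangle_ineq)
    then have "(cmod (cinner (x + y) (\<phi> n)))\<^sup>2 \<le> (cmod (cinner x (\<phi> n)) + cmod (cinner y (\<phi> n)))\<^sup>2"
      by (simp add: power_mono)
    also have "\<dots> \<le> 2 * (cmod (cinner x (\<phi> n)))\<^sup>2 + 2 * (cmod (cinner y (\<phi> n)))\<^sup>2"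
      by (smt (verit) power2_sum sum_squares_bound)
    finally show ?thesis .
  qed
  show "summable (\<lambda>n. (cmod (cinner (x + y) (\<phi> n)))\<^sup>2)"
    by (rule summable_comparison_test[OF _ summable_add[OF summable_mult[OF x] summable_mult[OF y]]])
      (use b in auto)
next
  fix c and x :: 'a
  assume x: "summable (\<lambda>n. (cmod (cinner x (\<phi> n)))\<^sup>2)"
  have "(\<lambda>n. (cmod (cinner (c *\<^sub>C x) (\<phi> n)))\<^sup>2) = (\<lambda>n. (cmod c)\<^sup>2 * (cmod (cinner x (\<phi> n)))\<^sup>2)"
    by (simp add: cinner_scaleC_left norm_mult power_mult_distrib)
  then show "summable (\<lambda>n. (cmod (cinner (c *\<^sub>C x) (\<phi> n)))\<^sup>2)"
    using summable_mult[OF x, of "(cmod c)\<^sup>2"] by (simp only:)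
qed
lemma lspan_phi_sums:
  assumes bo: "biorthogonal \<phi> \<psi>" and y: "y \<in> lspan \<phi>"
  shows "(\<lambda>k. cinner x (\<phi> k) * cinner (\<psi> k) y) sums cinner (x::'a::chilbert) y"
proof -
  obtain F c where F: "finite F" "y = (\<Sum>i\<in>F. c i *\<^sub>C \<phi> i)" using y unfolding lspan_def by blast
  have ck: "cinner (\<psi> k) y = (if k \<in> F then cnj (c k) else 0)" for k
    unfolding F(2) cinner_lincomb_right biorth2[OF bo] using F(1)
    by (simp add: if_distrib[of "\<lambda>t. cnj (c _) * t"] sum.delta' cong: if_cong)
  have "(\<lambda>k. cinner x (\<phi> k) * cinner (\<psi> k) y) sums (\<Sum>k\<in>F. cinner x (\<phi> k) * cinner (\<psi> k) y)"
    by (rule sums_finite[OF F(1)]) (simp add: ck)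
  also have "(\<Sum>k\<in>F. cinner x (\<phi> k) * cinner (\<psi> k) y) = (\<Sum>k\<in>F. cnj (c k) * cinner x (\<phi> k))"
    by (rule sum.cong) (simp_all add: ck)
  also have "\<dots> = cinner x y"
    unfolding F(2) cinner_lincomb_right by simp
  finally show ?thesis .
qed

lemma lspan_psi_sums:
  assumes bo: "biorthogonal \<phi> \<psi>" and x: "x \<in> lspan \<psi>"
  shows "(\<lambda>k. cinner x (\<phi> k) * cinner (\<psi> k) y) sums cinner x (y::'a::chilbert)"
proof -
  obtain F c where F: "finite F" "x = (\<Sum>i\<in>F. c i *\<^sub>C \<psi> i)" using x unfolding lspan_def by blast
  have ck: "cinner x (\<phi> k) = (if k \<in> F then c k else 0)" for k
    unfolding F(2) cinner_lincomb_left biorth2[OF bo] using F(1)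
    by (simp add: if_distrib[of "\<lambda>t. c _ * t"] sum.delta cong: if_cong)
  have "(\<lambda>k. cinner x (\<phi> k) * cinner (\<psi> k) y) sums (\<Sum>k\<in>F. cinner x (\<phi> k) * cinner (\<psi> k) y)"
    by (rule sums_finite[OF F(1)]) (simp add: ck)
  also have "(\<Sum>k\<in>F. cinner x (\<phi> k) * cinner (\<psi> k) y) = (\<Sum>k\<in>F. c k * cinner (\<psi> k) y)"
    by (rule sum.cong) (simp_all add: ck)
  also have "\<dots> = cinner x y"
    unfolding F(2) cinner_lincomb_left by simp
  finally show ?thesis .
qed

lemma lspan_phi_Dom:
  assumes bo: "biorthogonal \<phi> \<psi>"
  shows "lspan \<phi> \<subseteq> Dom (\<psi> :: nat \<Rightarrow> 'a::chilbert)"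
proof
  fix y assume "y \<in> lspan \<phi>"
  then obtain F c where F: "finite F" "y = (\<Sum>i\<in>F. c i *\<^sub>C \<phi> i)" unfolding lspan_def by blast
  have ck: "cinner y (\<psi> k) = (if k \<in> F then c k else 0)" for k
    unfolding F(2) cinner_lincomb_left biorth1[OF bo] using F(1)
    by (simp add: if_distrib[of "\<lambda>t. c _ * t"] sum.delta' cong: if_cong)
  show "y \<in> Dom \<psi>" unfolding Dom_def
    by (rule CollectI, rule summable_finite[OF F(1)]) (simp add: ck)
qed

lemma lspan_psi_Dom:
  assumes bo: "biorthogonal \<phi> \<psi>"
  shows "lspan \<psi> \<subseteq> Dom (\<phi> :: nat \<Rightarrow> 'a::chilbert)"
proof
  fix y assume "y \<in> lspan \<psi>"
  then obtain F c where F: "finite F" "y = (\<Sum>i\<in>F. c i *\<^sub>C \<psi> i)" unfolding lspan_def by blast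
  have ck: "cinner y (\<phi> k) = (if k \<in> F then c k else 0)" for k
    unfolding F(2) cinner_lincomb_left biorth2[OF bo] using F(1)
    by (simp add: if_distrib[of "\<lambda>t. c _ * t"] sum.delta cong: if_cong)
  show "y \<in> Dom \<phi>" unfolding Dom_def
    by (rule CollectI, rule summable_finite[OF F(1)]) (simp add: ck)
qed
theorem proposition4p2:
  fixes \<phi> \<psi> :: "nat \<Rightarrow> 'a::chilbert"
  assumes "biorthogonal \<phi> \<psi>"
    and "dense_in_H (Dom \<phi>)"
    and "dense_in_H (Dom \<psi>)"
  shows "((\<exists>E. quasi_basis \<phi> \<psi> (Dom \<phi>) E) \<longleftrightarrow> dense_in_H (lspan \<phi>))
       \<and> (dense_in_H (lspan \<phi>) \<longrightarrow> quasi_basis \<phi> \<psi> (Dom \<phi>) (lspan \<phi>))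
       \<and> ((\<exists>D. quasi_basis \<phi> \<psi> D (Dom \<psi>)) \<longleftrightarrow> dense_in_H (lspan \<psi>))
       \<and> (dense_in_H (lspan \<psi>) \<longrightarrow> quasi_basis \<phi> \<psi> (lspan \<psi>) (Dom \<psi>))"
proof -
  note bo = assms(1)
  have Q1: "quasi_basis \<phi> \<psi> (Dom \<phi>) (lspan \<phi>)" if d: "dense_in_H (lspan \<phi>)"
    unfolding quasi_basis_def
    using csubspace_Dom[of \<phi>] csubspace_lspan[of \<phi>] assms(2) d lspan_psi_Dom[OF bo]
      lspan_phi_Dom[OF bo] lspan_phi_sums[OF bo] by blast
  have Q2: "quasi_basis \<phi> \<psi> (lspan \<psi>) (Dom \<psi>)" if d: "dense_in_H (lspan \<psi>)"
    unfolding quasi_basis_def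
    using csubspace_Dom[of \<psi>] csubspace_lspan[of \<psi>] assms(3) d lspan_psi_Dom[OF bo]
      lspan_phi_Dom[OF bo] lspan_psi_sums[OF bo] by blast
  have F1: "dense_in_H (lspan \<phi>)" if "quasi_basis \<phi> \<psi> (Dom \<phi>) E" for E
  proof (rule dense_of_orth[OF csubspace_lspan])
    fix x assume orth: "\<forall>s\<in>lspan \<phi>. cinner x s = 0"
    have z: "\<And>k. cinner x (\<phi> k) = 0" using orth gen_in_lspan by blast
    have xD: "x \<in> Dom \<phi>" unfolding Dom_def by (simp add: z)
    have Ed: "dense_in_H E" and sm: "\<forall>y\<in>E. (\<lambda>k. cinner x (\<phi> k) * cinner (\<psi> k) y) sums cinner x y"
      using that xD unfolding quasi_basis_def by blast+
    have "\<forall>y\<in>E. cinner x y = 0"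
    proof
      fix y assume "y \<in> E"
      then have "(\<lambda>k. 0) sums cinner x y" using sm by (simp add: z)
      then show "cinner x y = 0" using sums_zero sums_unique2 by blast
    qed
    then show "x = 0" using orth_dense_zero[OF Ed] by blast
  qed
  have F2: "dense_in_H (lspan \<psi>)" if "quasi_basis \<phi> \<psi> D (Dom \<psi>)" for D
  proof (rule dense_of_orth[OF csubspace_lspan])
    fix y assume orth: "\<forall>s\<in>lspan \<psi>. cinner y s = 0"
    have z0: "\<And>k. cinner y (\<psi> k) = 0" using orth gen_in_lspan by blast
    have z: "\<And>k. cinner (\<psi> k) y = 0" using z0 cinner_commute by (metis complex_cnj_zero)
    have yD: "y \<in> Dom \<psi>" unfolding Dom_def by (simp add: z0)
    have Dd: "dense_in_H D" and sm: "\<forall>x\<in>D. (\<lambda>k. cinner x (\<phi> k) * cinner (\<psi> k) y) sums cinner x y"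
      using that yD unfolding quasi_basis_def by blast+
    have "\<forall>x\<in>D. cinner y x = 0"
    proof
      fix x assume "x \<in> D"
      then have "(\<lambda>k. 0) sums cinner x y" using sm by (simp add: z)
      then have "cinner x y = 0" using sums_zero sums_unique2 by blast
      then show "cinner y x = 0" using cinner_commute by (metis complex_cnj_zero)
    qed
    then show "y = 0" using orth_dense_zero[OF Dd] by blast
  qed
  show ?thesis using Q1 Q2 F1 F2 by blast
qed
end
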